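(* Let the setting, Assumption A and Assumption B below hold, with agents and data sampled without replacement, and let $w_i$ be the iterates generated by the ISFedAvg algorithm below, with $\widetilde w_i=w^o-w_i$. For sufficiently small step-size $\mu$, the mean-square error converges exponentially fast: $$\mathbb{E}\|\widetilde w_i\|^2\le O\big((\lambda')^i\big)+O(\mu)\big(\sigma_s^2+\xi^2\big)+O(\mu^2)\frac1K\sum_{k=1}^K\sigma_{q,k}^2,$$ where $\lambda'=1-O(\mu)+O(\mu^2)\in[0,1)$, and $$\sigma_s^2=\frac{1}{K^2}\sum_{k=1}^K\frac{1}{p_k}\Big\{\sigma_{s,k}^2+\Big(3+\frac{6}{E_kB_k}\Big)\|\nabla_wP_k(w^o)\|^2\Big\},\quad \sigma_{s,k}^2=\frac{6}{E_kB_kN_k^2}\sum_{n=1}^{N_k}\frac{1}{p_n^{(k)}}\|\nabla_wQ_k(w^o;x_{k,n})\|^2,$$ $$\sigma_{q,k}^2=\frac{3}{B_kN_k^2}\sum_{n=1}^{N_k}\frac{1}{p_n^{(k)}}\|\nabla_wQ_k(w_k^o;x_{k,n})\|^2.$$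
   Context: There are $K$ agents; agent $k$ holds data points $x_{k,1},\dots,x_{k,N_k}$, a loss $Q_k(w;x)$ differentiable in $w\in\mathbb{R}^M$, and the empirical risk $P_k(w)=\frac1{N_k}\sum_{n=1}^{N_k}Q_k(w;x_{k,n})$. Let $w^o=\arg\min_w\frac1K\sum_kP_k(w)$ and $w_k^o=\arg\min_wP_k(w)$. Assumption A: each $P_k$ is $\nu$-strongly convex ($\nu>0$), each $Q_k(\cdot;x_{k,n})$ is convex with $\delta$-Lipschitz gradient. Assumption B: $\|w_k^o-w^o\|\le\xi$ for all $k$. ISFedAvg with step-size $\mu>0$ and initial point $w_0$: at iteration $i=1,2,\dots$, select $L$ agents $\mathcal{L}_i$ from $\{1,\dots,K\}$ without replacement with $\mathbb{P}(k\in\mathcal{L}_i)=Lp_k$ ($p_k>0$, $\sum_kp_k=1$); each $k\in\mathcal{L}_i$ sets $w_{k,0}=w_{i-1}$ and for $e=1,\dots,E_k$ draws a mini-batch $\mathcal{B}_{k,e}$ of $B_k$ indices from $\{1,\dots,N_k\}$ without replacement with $\mathbb{P}(n\in\mathcal{B}_{k,e})=B_kp_n^{(k)}$ ($p_n^{(k)}>0$, $\sum_np_n^{(k)}=1$), independently of the past, and updates $w_{k,e}=w_{k,e-1}-\frac{\mu}{Kp_kE_kB_k}\sum_{b\in\mathcal{B}_{k,e}}\frac{1}{N_kp_b^{(k)}}\nabla_wQ_k(w_{k,e-1};x_{k,b})$; then $w_i=\frac1L\sum_{k\in\mathcal{L}_i}w_{k,E_k}$. The inclusion probabilities are fixed across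 iterations. The notation $O(\mu^a)$ (resp. $O((\lambda')^i)$) denotes a term bounded by $C\mu^a$ (resp. $C(\lambda')^i$) with $C$ independent of $\mu$ and $i$ (it may depend on the problem data, inclusion probabilities and initialization). *)

theory Defs
  imports "HOL-Probability.Probability"
begin

definition strongly_convex :: "real \<Rightarrow> ('a::real_normed_vector \<Rightarrow> real) \<Rightarrow> bool" where
  "strongly_convex \<nu> f \<longleftrightarrow>
     (\<forall>x y t. 0 \<le> t \<and> t \<le> 1 \<longrightarrow>
        f ((1 - t) *\<^sub>R x + t *\<^sub>R y)
          \<le> (1 - t) * f x + t * f y - \<nu> / 2 * t * (1 - t) * (norm (x - y))\<^sup>2)"

fun local_run :: "('a \<Rightarrow> nat set \<Rightarrow> 'a) \<Rightarrow> nat set pmf \<Rightarrow> nat \<Rightarrow> 'a \<Rightarrow> 'a pmf" where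
  "local_run upd D 0 w = return_pmf w"
| "local_run upd D (Suc e) w = bind_pmf (local_run upd D e w) (\<lambda>v. map_pmf (upd v) D)"

fun sum_runs :: "(nat \<Rightarrow> 'a \<Rightarrow> 'a::{zero,plus} pmf) \<Rightarrow> nat list \<Rightarrow> 'a \<Rightarrow> 'a pmf" where
  "sum_runs R [] w = return_pmf 0"
| "sum_runs R (k # ks) w = bind_pmf (R k w) (\<lambda>v. map_pmf (\<lambda>s. v + s) (sum_runs R ks w))"

definition isfedavg_local ::
  "nat \<Rightarrow> (nat \<Rightarrow> real) \<Rightarrow> (nat \<Rightarrow> nat) \<Rightarrow> (nat \<Rightarrow> nat) \<Rightarrow> (nat \<Rightarrow> nat)
   \<Rightarrow> (nat \<Rightarrow> nat \<Rightarrow> real) \<Rightarrow> (nat \<Rightarrow> 'a \<Rightarrow> 'd \<Rightarrow> 'a::real_vector) \<Rightarrow> (nat \<Rightarrow> nat \<Rightarrow> 'd)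
   \<Rightarrow> real \<Rightarrow> (nat \<Rightarrow> nat set pmf) \<Rightarrow> nat \<Rightarrow> 'a \<Rightarrow> 'a pmf" where
  "isfedavg_local K p E B N pn gQ x \<mu> D k w =
     local_run
       (\<lambda>v Bs. v - (\<mu> / (real K * p k * real (E k) * real (B k))) *\<^sub>R
                   (\<Sum>b\<in>Bs. (1 / (real (N k) * pn k b)) *\<^sub>R gQ k v (x k b)))
       (D k) (E k) w"

definition isfedavg_step :: "(nat \<Rightarrow> 'a \<Rightarrow> 'a::real_vector pmf) \<Rightarrow> nat set pmf \<Rightarrow> nat \<Rightarrow> 'a \<Rightarrow> 'a pmf" where
  "isfedavg_step R S L w =
     bind_pmf S (\<lambda>A. map_pmf (\<lambda>s. (1 / real L) *\<^sub>R s) (sum_runs R (sorted_list_of_set A) w))"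

fun iterate_pmf :: "('a \<Rightarrow> 'a pmf) \<Rightarrow> 'a \<Rightarrow> nat \<Rightarrow> 'a pmf" where
  "iterate_pmf step w0 0 = return_pmf w0"
| "iterate_pmf step w0 (Suc i) = bind_pmf (iterate_pmf step w0 i) step"

definition isfedavg ::
  "nat \<Rightarrow> nat \<Rightarrow> (nat \<Rightarrow> real) \<Rightarrow> nat set pmf \<Rightarrow> (nat \<Rightarrow> nat) \<Rightarrow> (nat \<Rightarrow> nat) \<Rightarrow> (nat \<Rightarrow> nat)
   \<Rightarrow> (nat \<Rightarrow> nat \<Rightarrow> real) \<Rightarrow> (nat \<Rightarrow> nat set pmf) \<Rightarrow> (nat \<Rightarrow> 'a \<Rightarrow> 'd \<Rightarrow> 'a::real_vector)
   \<Rightarrow> (nat \<Rightarrow> nat \<Rightarrow> 'd) \<Rightarrow> real \<Rightarrow> 'a \<Rightarrow> nat \<Rightarrow> 'a pmf" where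
  "isfedavg K L p S E B N pn D gQ x \<mu> w0 i =
     iterate_pmf (isfedavg_step (isfedavg_local K p E B N pn gQ x \<mu> D) S L) w0 i"

end

theory Submission
  imports Defs
begin


lemma fin_bind_pmf:
  assumes fin: "finite (set_pmf M)" and finN: "\<And>x. x \<in> set_pmf M \<Longrightarrow> finite (set_pmf (N x))"
  shows "finite (set_pmf (bind_pmf M N))"
  using fin finN by simp

lemma int_bind_pmf:
  fixes f :: "'b \<Rightarrow> real"
  assumes fin: "finite (set_pmf M)" and finN: "\<And>x. x \<in> set_pmf M \<Longrightarrow> finite (set_pmf (N x))"
  shows "measure_pmf.expectation (bind_pmf M N) f = measure_pmf.expectation M (\<lambda>x. measure_pmf.expectation (N x) f)"
proof -
  define T where "T = set_pmf (bind_pmf M N)"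
  have finT: "finite T" unfolding T_def using fin finN by (rule fin_bind_pmf)
  have subT: "\<And>x. x \<in> set_pmf M \<Longrightarrow> set_pmf (N x) \<subseteq> T" unfolding T_def by auto
  have "measure_pmf.expectation (bind_pmf M N) f = (\<Sum>y\<in>T. f y * pmf (bind_pmf M N) y)"
    by (rule integral_measure_pmf_real[OF finT]) (auto simp: T_def)
  also have "\<dots> = (\<Sum>y\<in>T. f y * (\<Sum>x\<in>set_pmf M. pmf (N x) y * pmf M x))"
    by (intro sum.cong refl arg_cong2[where f="(*)"], unfold pmf_bind, rule integral_measure_pmf_real)
       (auto simp: fin)
  also have "\<dots> = (\<Sum>x\<in>set_pmf M. (\<Sum>y\<in>T. f y * pmf (N x) y) * pmf M x)"
    unfolding sum_distrib_left sum_distrib_right by (subst sum.swap) (simp add: mult_ac)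
  also have "\<dots> = (\<Sum>x\<in>set_pmf M. measure_pmf.expectation (N x) f * pmf M x)"
  proof (intro sum.cong refl arg_cong2[where f="(*)"])
    fix x assume x: "x \<in> set_pmf M"
    show "(\<Sum>y\<in>T. f y * pmf (N x) y) = measure_pmf.expectation (N x) f"
      by (rule sym, rule integral_measure_pmf_real[OF finT]) (use subT[OF x] in blast)
  qed
  also have "\<dots> = measure_pmf.expectation M (\<lambda>x. measure_pmf.expectation (N x) f)"
    by (rule sym, rule integral_measure_pmf_real) (auto simp: fin)
  finally show ?thesis .
qed

lemma exp_mono_fin:
  fixes f g :: "'b \<Rightarrow> real"
  assumes "finite (set_pmf M)" "\<And>x. x \<in> set_pmf M \<Longrightarrow> f x \<le> g x"
  shows "measure_pmf.expectation M f \<le> measure_pmf.expectation M g"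
  using assms by (intro integral_mono_AE integrable_measure_pmf_finite AE_pmfI) auto

lemma exp_sum_incl:
  fixes f :: "nat \<Rightarrow> real" and M :: "nat set pmf"
  assumes "finite (set_pmf M)" "\<And>X. X \<in> set_pmf M \<Longrightarrow> X \<subseteq> {..<n}"
  shows "measure_pmf.expectation M (\<lambda>X. \<Sum>j\<in>X. f j) = (\<Sum>j<n. measure_pmf.prob M {X. j \<in> X} * f j)"
proof -
  have "measure_pmf.expectation M (\<lambda>X. \<Sum>j\<in>X. f j) = measure_pmf.expectation M (\<lambda>X. \<Sum>j<n. indicator {X. j \<in> X} X * f j)"
  proof (intro integral_cong_AE AE_pmfI)
    fix X assume "X \<in> set_pmf M"
    then have "X \<subseteq> {..<n}" using assms by auto
    then show "(\<Sum>j\<in>X. f j) = (\<Sum>j<n. indicator {X. j \<in> X} X * f j)"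
      by (simp add: indicator_def sum.If_cases Int_absorb1 Int_absorb2)
  qed auto
  also have "\<dots> = (\<Sum>j<n. measure_pmf.expectation M (\<lambda>X. indicator {X. j \<in> X} X * f j))"
    by (rule Bochner_Integration.integral_sum) (auto intro: integrable_measure_pmf_finite assms)
  also have "\<dots> = (\<Sum>j<n. measure_pmf.prob M {X. j \<in> X} * f j)"
    by simp
  finally show ?thesis .
qed

lemma norm_sq_sub_scale:
  fixes u S :: "'a::real_inner"
  shows "(norm (u - a *\<^sub>R S))\<^sup>2 = (norm u)\<^sup>2 - 2 * a * inner u S + a\<^sup>2 * (norm S)\<^sup>2"
  unfolding power2_norm_eq_inner by (simp add: inner_diff_left inner_diff_right inner_commute algebra_simps power2_eq_square)

lemma exp_return: "measure_pmf.expectation (return_pmf x) f = (f x :: real)"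
  by (simp add: return_pmf.rep_eq integral_return)

locale agent =
  fixes g :: "nat \<Rightarrow> 'a::real_inner \<Rightarrow> 'a" and Nk :: nat and Bk :: real and Ek :: nat
    and c :: "nat \<Rightarrow> real" and Dk :: "nat set pmf" and a dl \<Gamma> :: real and wo :: 'a
  assumes c_pos: "\<And>n. n < Nk \<Longrightarrow> c n > 0"
    and lip: "\<And>n v u. n < Nk \<Longrightarrow> norm (g n v - g n u) \<le> dl * norm (v - u)"
    and gwo: "\<And>n. n < Nk \<Longrightarrow> norm (g n wo) \<le> \<Gamma>"
    and dl1: "dl \<ge> 1" and a_nn: "a \<ge> 0" and Bk_nn: "Bk \<ge> 0" and Nk_pos: "Nk \<ge> 1"
    and D_fin: "finite (set_pmf Dk)"
    and D_sub: "\<And>Bs. Bs \<in> set_pmf Dk \<Longrightarrow> Bs \<subseteq> {..<Nk}"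
    and D_incl: "\<And>n. n < Nk \<Longrightarrow> measure_pmf.prob Dk {Bs. n \<in> Bs} * c n = Bk / Nk"
begin

definition "upd v Bs = v - a *\<^sub>R (\<Sum>b\<in>Bs. c b *\<^sub>R g b v)"
definition "gbar v = (1 / real Nk) *\<^sub>R (\<Sum>n<Nk. g n v)"
definition "H = (\<Sum>n<Nk. c n)"
definition "t = 2 * a * H * dl"

lemma H_nn: "H \<ge> 0" unfolding H_def using c_pos by (auto intro: sum_nonneg less_imp_le)
lemma t_nn: "t \<ge> 0" unfolding t_def using H_nn dl1 a_nn by auto
lemma G_nn: "\<Gamma> \<ge> 0"
proof -
  have "0 < Nk" using Nk_pos by simp
  then show ?thesis using gwo[of 0] norm_ge_zero[of "g 0 wo"] by linarith
qed

lemma g_bound: "n < Nk \<Longrightarrow> norm (g n v) \<le> dl * (norm (v - wo) + \<Gamma>)"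
proof -
  assume n: "n < Nk"
  have "norm (g n v) \<le> norm (g n v - g n wo) + norm (g n wo)" using norm_triangle_sub[of "g n v" "g n wo"] by (simp add: add.commute)
  also have "\<dots> \<le> dl * norm (v - wo) + \<Gamma>" using lip[OF n, of v wo] gwo[OF n] by linarith
  also have "\<dots> \<le> dl * (norm (v - wo) + \<Gamma>)" using mult_right_mono[OF dl1 G_nn] by (simp add: algebra_simps)
  finally show ?thesis .
qed

lemma S_bound:
  assumes "Bs \<subseteq> {..<Nk}"
  shows "norm (\<Sum>b\<in>Bs. c b *\<^sub>R g b v) \<le> H * dl * (norm (v - wo) + \<Gamma>)"
proof -
  have fin: "finite Bs" using assms finite_subset by blast
  have "norm (\<Sum>b\<in>Bs. c b *\<^sub>R g b v) \<le> (\<Sum>b\<in>Bs. c b * norm (g b v))"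
    using c_pos assms by (intro norm_sum[THEN order_trans] sum_mono) (auto simp: abs_of_pos)
  also have "\<dots> \<le> (\<Sum>n<Nk. c n * norm (g n v))"
  proof (rule sum_mono2)
    fix b assume "b \<in> {..<Nk} - Bs" then have "b < Nk" by simp
    then show "0 \<le> c b * norm (g b v)" using c_pos[of b] by simp
  qed (use assms in auto)
  also have "\<dots> \<le> (\<Sum>n<Nk. c n * (dl * (norm (v - wo) + \<Gamma>)))"
    using c_pos g_bound by (intro sum_mono mult_left_mono) (auto intro: less_imp_le)
  also have "\<dots> = H * dl * (norm (v - wo) + \<Gamma>)" by (simp add: H_def sum_distrib_right mult.assoc)
  finally show ?thesis .
qed

lemma gbar_bound: "norm (gbar v) \<le> dl * (norm (v - wo) + \<Gamma>)"
proof -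
  have "norm (gbar v) = (1 / real Nk) * norm (\<Sum>n<Nk. g n v)" by (simp add: gbar_def)
  also have "\<dots> \<le> (1 / real Nk) * (\<Sum>n<Nk. dl * (norm (v - wo) + \<Gamma>))"
    by (intro mult_left_mono norm_sum[THEN order_trans] sum_mono g_bound) auto
  also have "\<dots> = dl * (norm (v - wo) + \<Gamma>)" using Nk_pos by simp
  finally show ?thesis .
qed

lemma gbar_lip: "norm (gbar v - gbar u) \<le> dl * norm (v - u)"
proof -
  have "gbar v - gbar u = (1 / real Nk) *\<^sub>R (\<Sum>n<Nk. g n v - g n u)"
    by (simp add: gbar_def sum_subtractf scaleR_diff_right)
  then have "norm (gbar v - gbar u) = (1 / real Nk) * norm (\<Sum>n<Nk. g n v - g n u)" by simp
  also have "\<dots> \<le> (1 / real Nk) * (\<Sum>n<Nk. dl * norm (v - u))"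
    by (intro mult_left_mono norm_sum[THEN order_trans] sum_mono lip) auto
  also have "\<dots> = dl * norm (v - u)" using Nk_pos by simp
  finally show ?thesis .
qed

lemma run_fin: "finite (set_pmf (local_run upd Dk j w))"
  by (induction j) (auto intro!: finite_UN_I D_fin)

lemma drift:
  assumes Et: "real Ek * t \<le> 1" and j: "j \<le> Ek" and v: "v \<in> set_pmf (local_run upd Dk j w)"
  shows "norm (v - w) \<le> real j * t * (norm (w - wo) + \<Gamma>)"
  using j v
proof (induction j arbitrary: v)
  case 0 then show ?case by simp
next
  case (Suc j)
  from Suc.prems obtain u Bs where u: "u \<in> set_pmf (local_run upd Dk j w)" and Bs: "Bs \<in> set_pmf Dk"
    and v: "v = upd u Bs" by auto
  define m where "m = norm (w - wo) + \<Gamma>"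
  have IH: "norm (u - w) \<le> real j * t * m" using Suc.IH[OF Suc_leD[OF Suc.prems(1)] u] unfolding m_def .
  have "real j \<le> real Ek" using Suc.prems(1) by simp
  then have jt: "real j * t \<le> 1" using order_trans[OF mult_right_mono[OF _ t_nn] Et] by blast
  have m_nn: "m \<ge> 0" using G_nn m_def by simp
  have "norm (u - wo) + \<Gamma> \<le> norm (u - w) + m" unfolding m_def
    using norm_triangle_ineq[of "u - w" "w - wo"] by simp
  also have "\<dots> \<le> 2 * m" using IH jt m_nn
  proof -
    have "real j * t * m \<le> 1 * m" using mult_right_mono[OF jt m_nn] .
    then show ?thesis using IH by linarith
  qed
  finally have um: "norm (u - wo) + \<Gamma> \<le> 2 * m" .
  have "norm (v - w) \<le> norm (u - w) + norm (a *\<^sub>R (\<Sum>b\<in>Bs. c b *\<^sub>R g b u))"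
  proof -
    have "v - w = (u - w) - a *\<^sub>R (\<Sum>b\<in>Bs. c b *\<^sub>R g b u)" unfolding v upd_def by simp
    then show ?thesis by (simp only: norm_triangle_ineq4)
  qed
  also have "norm (a *\<^sub>R (\<Sum>b\<in>Bs. c b *\<^sub>R g b u)) \<le> a * (H * dl * (norm (u - wo) + \<Gamma>))"
    using S_bound[OF D_sub[OF Bs]] a_nn by (simp add: mult_left_mono)
  also have "\<dots> \<le> a * (H * dl * (2 * m))"
    using um a_nn H_nn dl1 by (intro mult_left_mono) auto
  finally have fin1: "norm (v - w) \<le> norm (u - w) + a * (H * dl * (2 * m))" by simp
  have tm: "a * (H * dl * (2 * m)) = t * m" by (simp add: t_def mult_ac)
  have sj: "real (Suc j) * t * m = real j * t * m + t * m" by (simp add: distrib_right)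
  show ?case using fin1 tm sj IH unfolding m_def[symmetric] by linarith
qed

lemma step_moment:
  assumes m: "norm (v - wo) + \<Gamma> \<le> 2 * m"
  shows "measure_pmf.expectation Dk (\<lambda>Bs. (norm (upd v Bs - wo))\<^sup>2)
     \<le> (norm (v - wo))\<^sup>2 - 2 * (a * Bk) * inner (v - wo) (gbar v) + 4 * a\<^sup>2 * H\<^sup>2 * dl\<^sup>2 * m\<^sup>2"
proof -
  define F where "F Bs = (\<Sum>b\<in>Bs. c b * inner (v - wo) (g b v))" for Bs
  have pw: "(norm (upd v Bs - wo))\<^sup>2 \<le> (norm (v - wo))\<^sup>2 - 2 * a * F Bs + 4 * a\<^sup>2 * H\<^sup>2 * dl\<^sup>2 * m\<^sup>2"
    if Bs: "Bs \<in> set_pmf Dk" for Bs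
  proof -
    define S where "S = (\<Sum>b\<in>Bs. c b *\<^sub>R g b v)"
    have e1: "upd v Bs - wo = (v - wo) - a *\<^sub>R S" by (simp add: upd_def S_def)
    have eq: "(norm (upd v Bs - wo))\<^sup>2 = (norm (v - wo))\<^sup>2 - 2 * a * inner (v - wo) S + a\<^sup>2 * (norm S)\<^sup>2"
      unfolding e1 by (rule norm_sq_sub_scale)
    have iS: "inner (v - wo) S = F Bs" by (simp add: S_def F_def inner_sum_right)
    have eq2: "(norm (upd v Bs - wo))\<^sup>2 = (norm (v - wo))\<^sup>2 - 2 * a * F Bs + a\<^sup>2 * (norm S)\<^sup>2"
      using eq iS by simp
    have "norm S \<le> H * dl * (norm (v - wo) + \<Gamma>)" unfolding S_def by (rule S_bound[OF D_sub[OF Bs]])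
    also have "\<dots> \<le> H * dl * (2 * m)" using m H_nn dl1 by (intro mult_left_mono) auto
    finally have "norm S \<le> 2 * H * dl * m" by simp
    then have "(norm S)\<^sup>2 \<le> (2 * H * dl * m)\<^sup>2" by (intro power_mono) auto
    then have "a\<^sup>2 * (norm S)\<^sup>2 \<le> a\<^sup>2 * (2 * H * dl * m)\<^sup>2" by (intro mult_left_mono) auto
    moreover have "a\<^sup>2 * (2 * H * dl * m)\<^sup>2 = 4 * a\<^sup>2 * H\<^sup>2 * dl\<^sup>2 * m\<^sup>2"
      by (simp add: power_mult_distrib)
    ultimately show ?thesis using eq2 by linarith
  qed
  have EF: "measure_pmf.expectation Dk F = Bk * inner (v - wo) (gbar v)"
  proof -
    have "measure_pmf.expectation Dk F = (\<Sum>n<Nk. measure_pmf.prob Dk {X. n \<in> X} * (c n * inner (v - wo) (g n v)))"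
      unfolding F_def by (rule exp_sum_incl[OF D_fin D_sub])
    also have "\<dots> = (\<Sum>n<Nk. (Bk / Nk) * inner (v - wo) (g n v))"
      by (intro sum.cong refl) (simp only: mult.assoc[symmetric] D_incl lessThan_iff)
    also have "\<dots> = Bk * inner (v - wo) (gbar v)"
      by (simp add: gbar_def inner_sum_right sum_distrib_left)
    finally show ?thesis .
  qed
  have "measure_pmf.expectation Dk (\<lambda>Bs. (norm (upd v Bs - wo))\<^sup>2)
     \<le> measure_pmf.expectation Dk (\<lambda>Bs. (norm (v - wo))\<^sup>2 - 2 * a * F Bs + 4 * a\<^sup>2 * H\<^sup>2 * dl\<^sup>2 * m\<^sup>2)"
    by (rule exp_mono_fin[OF D_fin pw])
  also have "\<dots> = (norm (v - wo))\<^sup>2 - 2 * a * measure_pmf.expectation Dk F + 4 * a\<^sup>2 * H\<^sup>2 * dl\<^sup>2 * m\<^sup>2"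
    by (simp add: Bochner_Integration.integral_add Bochner_Integration.integral_diff integrable_measure_pmf_finite[OF D_fin])
  also have "\<dots> = (norm (v - wo))\<^sup>2 - 2 * (a * Bk) * inner (v - wo) (gbar v) + 4 * a\<^sup>2 * H\<^sup>2 * dl\<^sup>2 * m\<^sup>2"
    by (simp add: EF)
  finally show ?thesis .
qed

lemma cross_bound:
  assumes r: "norm (v - w) \<le> r" and vm: "norm (v - wo) + \<Gamma> \<le> 2 * m" and m: "m = norm (w - wo) + \<Gamma>"
  shows "\<bar>inner (v - wo) (gbar v) - inner (w - wo) (gbar w)\<bar> \<le> 3 * r * dl * m"
proof -
  have m0: "m \<ge> 0" using m G_nn by simp
  have r0: "r \<ge> 0" using r norm_ge_zero order_trans by blast
  have "inner (v - wo) (gbar v) - inner (w - wo) (gbar w) = inner (v - w) (gbar v) + inner (w - wo) (gbar v - gbar w)"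
    by (simp add: inner_diff_left inner_diff_right)
  moreover have "\<bar>inner (v - w) (gbar v)\<bar> \<le> r * (dl * (2 * m))"
  proof -
    have "\<bar>inner (v - w) (gbar v)\<bar> \<le> norm (v - w) * norm (gbar v)" by (rule Cauchy_Schwarz_ineq2)
    also have "\<dots> \<le> r * (dl * (2 * m))"
    proof (rule mult_mono[OF r _ r0 norm_ge_zero])
      show "norm (gbar v) \<le> dl * (2 * m)"
        using order_trans[OF gbar_bound[of v] mult_left_mono[OF vm]] dl1 by simp
    qed
    finally show ?thesis .
  qed
  moreover have "\<bar>inner (w - wo) (gbar v - gbar w)\<bar> \<le> m * (dl * r)"
  proof -
    have "\<bar>inner (w - wo) (gbar v - gbar w)\<bar> \<le> norm (w - wo) * norm (gbar v - gbar w)" by (rule Cauchy_Schwarz_ineq2)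
    also have "\<dots> \<le> m * (dl * r)"
    proof (rule mult_mono[OF _ _ m0 norm_ge_zero])
      show "norm (w - wo) \<le> m" using m G_nn by simp
      show "norm (gbar v - gbar w) \<le> dl * r"
        using order_trans[OF gbar_lip[of v w] mult_left_mono[OF r]] dl1 by simp
    qed
    finally show ?thesis .
  qed
  ultimately show ?thesis by (simp add: algebra_simps)
qed


lemma moment:
  assumes Et: "real Ek * t \<le> 1" and j: "j \<le> Ek"
  shows "measure_pmf.expectation (local_run upd Dk j w) (\<lambda>v. (norm (v - wo))\<^sup>2)
    \<le> (norm (w - wo))\<^sup>2 - 2 * real j * (a * Bk) * inner (w - wo) (gbar w)
       + real j * (4 * a\<^sup>2 * H\<^sup>2 * dl\<^sup>2 + 6 * (a * Bk) * (real Ek * t) * dl) * (norm (w - wo) + \<Gamma>)\<^sup>2"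
  using j
proof (induction j)
  case 0 then show ?case by (simp add: exp_return)
next
  case (Suc j)
  define m where "m = norm (w - wo) + \<Gamma>"
  have m0: "m \<ge> 0" using m_def G_nn by simp
  define Z where "Z = 4 * a\<^sup>2 * H\<^sup>2 * dl\<^sup>2 + 6 * (a * Bk) * (real Ek * t) * dl"
  have pw: "measure_pmf.expectation (map_pmf (upd v) Dk) (\<lambda>v. (norm (v - wo))\<^sup>2)
     \<le> (norm (v - wo))\<^sup>2 - 2 * (a * Bk) * inner (w - wo) (gbar w) + Z * m\<^sup>2"
    if v: "v \<in> set_pmf (local_run upd Dk j w)" for v
  proof -
    have dr: "norm (v - w) \<le> real j * t * m"
      using drift[OF Et Suc_leD[OF Suc.prems] v] unfolding m_def .
    have jt: "real j * t \<le> real Ek * t" using Suc.prems t_nn by (intro mult_right_mono) auto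
    have r: "norm (v - w) \<le> real Ek * t * m" using order_trans[OF dr mult_right_mono[OF jt m0]] .
    have Etm: "real Ek * t * m \<le> m" using mult_right_mono[OF Et m0] by simp
    have vm: "norm (v - wo) + \<Gamma> \<le> 2 * m"
      using norm_triangle_ineq[of "v - w" "w - wo"] r Etm m_def by simp
    have cb: "\<bar>inner (v - wo) (gbar v) - inner (w - wo) (gbar w)\<bar> \<le> 3 * (real Ek * t * m) * dl * m"
      by (rule cross_bound[OF r vm m_def])
    have aB: "a * Bk \<ge> 0" using a_nn Bk_nn by simp
    have "- 2 * (a * Bk) * inner (v - wo) (gbar v) \<le> - 2 * (a * Bk) * inner (w - wo) (gbar w) + 2 * (a * Bk) * (3 * (real Ek * t * m) * dl * m)"
    proof -
      have "inner (w - wo) (gbar w) - 3 * (real Ek * t * m) * dl * m \<le> inner (v - wo) (gbar v)" using cb by linarith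
      from mult_left_mono[OF this, of "2 * (a * Bk)"] aB show ?thesis by (simp add: algebra_simps)
    qed
    moreover have "measure_pmf.expectation (map_pmf (upd v) Dk) (\<lambda>v. (norm (v - wo))\<^sup>2)
       \<le> (norm (v - wo))\<^sup>2 - 2 * (a * Bk) * inner (v - wo) (gbar v) + 4 * a\<^sup>2 * H\<^sup>2 * dl\<^sup>2 * m\<^sup>2"
      using step_moment[OF vm] by simp
    ultimately show ?thesis unfolding Z_def by (simp add: algebra_simps power2_eq_square)
  qed
  have "measure_pmf.expectation (local_run upd Dk (Suc j) w) (\<lambda>v. (norm (v - wo))\<^sup>2)
     = measure_pmf.expectation (local_run upd Dk j w) (\<lambda>v. measure_pmf.expectation (map_pmf (upd v) Dk) (\<lambda>v. (norm (v - wo))\<^sup>2))"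
    by (simp only: local_run.simps, rule int_bind_pmf) (auto simp: run_fin D_fin)
  also have "\<dots> \<le> measure_pmf.expectation (local_run upd Dk j w) (\<lambda>v. (norm (v - wo))\<^sup>2 - 2 * (a * Bk) * inner (w - wo) (gbar w) + Z * m\<^sup>2)"
    by (rule exp_mono_fin[OF run_fin pw])
  also have "\<dots> = measure_pmf.expectation (local_run upd Dk j w) (\<lambda>v. (norm (v - wo))\<^sup>2) - 2 * (a * Bk) * inner (w - wo) (gbar w) + Z * m\<^sup>2"
    by (simp add: Bochner_Integration.integral_add Bochner_Integration.integral_diff integrable_measure_pmf_finite[OF run_fin])
  also have "\<dots> \<le> (norm (w - wo))\<^sup>2 - 2 * real j * (a * Bk) * inner (w - wo) (gbar w) + real j * Z * m\<^sup>2
       - 2 * (a * Bk) * inner (w - wo) (gbar w) + Z * m\<^sup>2"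
    using Suc.IH Suc.prems unfolding Z_def m_def by simp
  also have "\<dots> = (norm (w - wo))\<^sup>2 - 2 * real (Suc j) * (a * Bk) * inner (w - wo) (gbar w) + real (Suc j) * Z * m\<^sup>2"
    by (simp add: algebra_simps)
  finally show ?case unfolding Z_def m_def .
qed

end



lemma sc_tangent:
  fixes f :: "'a::real_inner \<Rightarrow> real"
  assumes sc: "strongly_convex \<nu> f" and d: "GDERIV f x :> Gx"
  shows "inner (y - x) Gx \<le> f y - f x - \<nu> / 2 * (norm (x - y))\<^sup>2"
proof -
  define \<phi> where "\<phi> t = f (x + t *\<^sub>R (y - x))" for t :: real
  have fd: "(f has_derivative (\<lambda>h. inner h Gx)) (at (x + 0 *\<^sub>R (y - x)))"
    using d by (simp add: gderiv_def)
  have ld: "((\<lambda>t::real. x + t *\<^sub>R (y - x)) has_derivative (\<lambda>t. t *\<^sub>R (y - x))) (at 0)"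
    by (auto intro!: derivative_eq_intros)
  have "(\<phi> has_derivative (\<lambda>t. inner (t *\<^sub>R (y - x)) Gx)) (at 0)"
    unfolding \<phi>_def by (rule has_derivative_compose[OF ld fd])
  then have "(\<phi> has_field_derivative inner (y - x) Gx) (at 0)"
    unfolding has_field_derivative_def by (rule has_derivative_eq_rhs) (auto simp: fun_eq_iff)
  then have "(\<phi> has_field_derivative inner (y - x) Gx) (at 0 within {0<..})"
    by (rule has_field_derivative_at_within)
  then have lim1: "((\<lambda>t. (\<phi> t - \<phi> 0) / (t - 0)) \<longlongrightarrow> inner (y - x) Gx) (at_right 0)"
    by (simp add: has_field_derivative_iff)
  have lim2: "((\<lambda>t. f y - f x - \<nu> / 2 * (1 - t) * (norm (x - y))\<^sup>2) \<longlongrightarrow> f y - f x - \<nu> / 2 * (1 - 0) * (norm (x - y))\<^sup>2) (at_right 0)"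
    by (intro tendsto_intros)
  have ev: "eventually (\<lambda>t. (\<phi> t - \<phi> 0) / (t - 0) \<le> f y - f x - \<nu> / 2 * (1 - t) * (norm (x - y))\<^sup>2) (at_right (0::real))"
  proof -
    have "eventually (\<lambda>t. t \<in> {0<..<1}) (at_right (0::real))"
      by (rule eventually_at_right_real) simp
    then show ?thesis
    proof (rule eventually_mono)
      fix t :: real assume t: "t \<in> {0<..<1}"
      have "f ((1 - t) *\<^sub>R x + t *\<^sub>R y) \<le> (1 - t) * f x + t * f y - \<nu> / 2 * t * (1 - t) * (norm (x - y))\<^sup>2"
        using sc t unfolding strongly_convex_def by auto
      moreover have "(1 - t) *\<^sub>R x + t *\<^sub>R y = x + t *\<^sub>R (y - x)" by (simp add: algebra_simps)
      ultimately have "\<phi> t - \<phi> 0 \<le> t * (f y - f x - \<nu> / 2 * (1 - t) * (norm (x - y))\<^sup>2)"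
        by (simp add: \<phi>_def algebra_simps)
      then show "(\<phi> t - \<phi> 0) / (t - 0) \<le> f y - f x - \<nu> / 2 * (1 - t) * (norm (x - y))\<^sup>2"
        using t by (simp add: divide_simps mult.commute)
    qed
  qed
  have "inner (y - x) Gx \<le> f y - f x - \<nu> / 2 * (1 - 0) * (norm (x - y))\<^sup>2"
    by (rule tendsto_le[OF _ lim2 lim1 ev]) simp
  then show ?thesis by simp
qed

lemma sc_mono:
  fixes f :: "'a::real_inner \<Rightarrow> real"
  assumes sc: "strongly_convex \<nu> f" and dx: "GDERIV f x :> Gx" and dy: "GDERIV f y :> Gy"
  shows "inner (x - y) (Gx - Gy) \<ge> \<nu> * (norm (x - y))\<^sup>2"
proof -
  have 1: "inner (y - x) Gx \<le> f y - f x - \<nu> / 2 * (norm (x - y))\<^sup>2" by (rule sc_tangent[OF sc dx])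
  have 2: "inner (x - y) Gy \<le> f x - f y - \<nu> / 2 * (norm (y - x))\<^sup>2" by (rule sc_tangent[OF sc dy])
  have "norm (y - x) = norm (x - y)" by (rule norm_minus_commute)
  moreover have "inner (x - y) (Gx - Gy) = - inner (y - x) Gx - inner (x - y) Gy"
    by (simp add: inner_diff_left inner_diff_right inner_commute)
  ultimately show ?thesis using 1 2 by simp
qed

lemma fermat_grad:
  fixes J :: "'a::real_inner \<Rightarrow> real"
  assumes d: "GDERIV J w :> G" and m: "\<And>v. J w \<le> J v"
  shows "G = 0"
proof -
  have "(\<lambda>h. inner h G) = (\<lambda>v. 0)"
    using d m by (intro differential_zero_maxmin[of w UNIV]) (auto simp: gderiv_def)
  then have "inner G G = 0" by meson
  then show ?thesis by simp
qed

lemma grad_avg: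
  fixes Q :: "nat \<Rightarrow> 'a::real_inner \<Rightarrow> real" and g :: "nat \<Rightarrow> 'a \<Rightarrow> 'a"
  assumes "\<And>n w. GDERIV (Q n) w :> g n w"
  shows "GDERIV (\<lambda>w. (1 / real N) * (\<Sum>n<N. Q n w)) w :> (1 / real N) *\<^sub>R (\<Sum>n<N. g n w)"
proof -
  have "((\<lambda>w. (1 / real N) * (\<Sum>n<N. Q n w)) has_derivative (\<lambda>h. (1 / real N) * (\<Sum>n<N. inner h (g n w)))) (at w)"
    using assms unfolding gderiv_def by (intro derivative_intros) auto
  then show ?thesis unfolding gderiv_def
    by (rule has_derivative_eq_rhs) (simp add: fun_eq_iff inner_sum_right)
qed




lemma young_sq:
  fixes a b :: "'a::real_inner"
  assumes n: "n > 0"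
  shows "(norm (a + b))\<^sup>2 \<le> (1 + n) * (norm a)\<^sup>2 + (1 + 1 / n) * (norm b)\<^sup>2"
proof -
  have e: "(norm (a + b))\<^sup>2 = (norm a)\<^sup>2 + 2 * inner a b + (norm b)\<^sup>2"
    unfolding power2_norm_eq_inner by (simp add: inner_add_left inner_add_right inner_commute)
  have "inner a b \<le> norm a * norm b" using Cauchy_Schwarz_ineq2[of a b] by linarith
  moreover have "2 * (norm a * norm b) \<le> n * (norm a)\<^sup>2 + (1 / n) * (norm b)\<^sup>2"
  proof -
    have "0 \<le> (n * norm a - norm b)\<^sup>2 / n" using n by simp
    also have "(n * norm a - norm b)\<^sup>2 / n = n * (norm a)\<^sup>2 + (1 / n) * (norm b)\<^sup>2 - 2 * (norm a * norm b)"
      using n by (simp add: power2_eq_square field_simps)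
    finally show ?thesis by simp
  qed
  ultimately show ?thesis using e by (simp add: algebra_simps)
qed

lemma sum_runs_fin:
  assumes "\<And>k. k \<in> set ks \<Longrightarrow> finite (set_pmf (R k w))"
  shows "finite (set_pmf (sum_runs R ks w))"
  using assms by (induction ks) (auto intro!: finite_UN_I)

lemma sum_runs_bound:
  fixes R :: "nat \<Rightarrow> 'a \<Rightarrow> 'a::real_inner pmf"
  assumes fin: "\<And>k. k \<in> set ks \<Longrightarrow> finite (set_pmf (R k w))"
  shows "measure_pmf.expectation (sum_runs R ks w) (\<lambda>s. (norm (s - real (length ks) *\<^sub>R wo))\<^sup>2)
     \<le> real (length ks) * (\<Sum>k\<leftarrow>ks. measure_pmf.expectation (R k w) (\<lambda>v. (norm (v - wo))\<^sup>2))"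
  using fin
proof (induction ks)
  case Nil then show ?case by (simp add: exp_return)
next
  case (Cons k ks)
  define n where "n = real (length ks)"
  define X where "X = measure_pmf.expectation (sum_runs R ks w) (\<lambda>s. (norm (s - n *\<^sub>R wo))\<^sup>2)"
  define \<Sigma> where "\<Sigma> = (\<Sum>k\<leftarrow>ks. measure_pmf.expectation (R k w) (\<lambda>v. (norm (v - wo))\<^sup>2))"
  have IH: "X \<le> n * \<Sigma>" using Cons unfolding X_def n_def \<Sigma>_def by auto
  have finR: "finite (set_pmf (R k w))" using Cons.prems by simp
  have finS: "finite (set_pmf (sum_runs R ks w))" using Cons.prems by (intro sum_runs_fin) auto
  have "measure_pmf.expectation (sum_runs R (k # ks) w) (\<lambda>s. (norm (s - real (length (k # ks)) *\<^sub>R wo))\<^sup>2)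
      = measure_pmf.expectation (R k w) (\<lambda>v. measure_pmf.expectation (sum_runs R ks w) (\<lambda>s. (norm ((v - wo) + (s - n *\<^sub>R wo)))\<^sup>2))"
    by (simp only: sum_runs.simps, subst int_bind_pmf[OF finR])
       (auto simp: finS n_def algebra_simps)
  also have "\<dots> \<le> measure_pmf.expectation (R k w) (\<lambda>v. (n + 1) * ((norm (v - wo))\<^sup>2 + \<Sigma>))"
  proof (rule exp_mono_fin[OF finR])
    fix v
    show "measure_pmf.expectation (sum_runs R ks w) (\<lambda>s. (norm ((v - wo) + (s - n *\<^sub>R wo)))\<^sup>2) \<le> (n + 1) * ((norm (v - wo))\<^sup>2 + \<Sigma>)"
    proof (cases "ks = []")
      case True then show ?thesis by (simp add: exp_return n_def \<Sigma>_def)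
    next
      case False
      then have n0: "n > 0" by (simp add: n_def)
      have "measure_pmf.expectation (sum_runs R ks w) (\<lambda>s. (norm ((v - wo) + (s - n *\<^sub>R wo)))\<^sup>2)
          \<le> measure_pmf.expectation (sum_runs R ks w) (\<lambda>s. (1 + n) * (norm (v - wo))\<^sup>2 + (1 + 1 / n) * (norm (s - n *\<^sub>R wo))\<^sup>2)"
        by (rule exp_mono_fin[OF finS young_sq[OF n0]])
      also have "\<dots> = (1 + n) * (norm (v - wo))\<^sup>2 + (1 + 1 / n) * X"
        by (simp add: X_def Bochner_Integration.integral_add integrable_measure_pmf_finite[OF finS])
      also have "\<dots> \<le> (1 + n) * (norm (v - wo))\<^sup>2 + (1 + 1 / n) * (n * \<Sigma>)"
        using IH n0 by (intro add_left_mono mult_left_mono) auto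
      also have "\<dots> = (n + 1) * ((norm (v - wo))\<^sup>2 + \<Sigma>)" using n0 by (simp add: field_simps)
      finally show ?thesis .
    qed
  qed
  also have "\<dots> = (n + 1) * (measure_pmf.expectation (R k w) (\<lambda>v. (norm (v - wo))\<^sup>2) + \<Sigma>)"
    by (simp add: Bochner_Integration.integral_add integrable_measure_pmf_finite[OF finR])
  also have "\<dots> = real (length (k # ks)) * (\<Sum>k\<leftarrow>k # ks. measure_pmf.expectation (R k w) (\<lambda>v. (norm (v - wo))\<^sup>2))"
    by (simp add: n_def \<Sigma>_def)
  finally show ?case .
qed

lemma iter_fin:
  assumes "\<And>w. finite (set_pmf (step w))"
  shows "finite (set_pmf (iterate_pmf step w0 i))"
  using assms by (induction i) (auto intro!: finite_UN_I)

lemma iter_bound: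
  fixes V :: "'a \<Rightarrow> real"
  assumes fin: "\<And>w. finite (set_pmf (step w))" and st: "\<And>w. measure_pmf.expectation (step w) V \<le> lam * V w + b"
    and lam: "lam \<ge> 0"
  shows "measure_pmf.expectation (iterate_pmf step w0 i) V \<le> lam ^ i * V w0 + b * (\<Sum>j<i. lam ^ j)"
proof (induction i)
  case 0 then show ?case by (simp add: exp_return)
next
  case (Suc i)
  have fi: "finite (set_pmf (iterate_pmf step w0 i))" by (rule iter_fin[OF fin])
  have "measure_pmf.expectation (iterate_pmf step w0 (Suc i)) V
     = measure_pmf.expectation (iterate_pmf step w0 i) (\<lambda>w. measure_pmf.expectation (step w) V)"
    by (simp only: iterate_pmf.simps, rule int_bind_pmf[OF fi fin])
  also have "\<dots> \<le> measure_pmf.expectation (iterate_pmf step w0 i) (\<lambda>w. lam * V w + b)"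
    by (rule exp_mono_fin[OF fi st])
  also have "\<dots> = lam * measure_pmf.expectation (iterate_pmf step w0 i) V + b"
    by (simp add: Bochner_Integration.integral_add integrable_measure_pmf_finite[OF fi])
  also have "\<dots> \<le> lam * (lam ^ i * V w0 + b * (\<Sum>j<i. lam ^ j)) + b"
    using Suc lam by (intro add_right_mono mult_left_mono) auto
  also have "\<dots> = lam ^ Suc i * V w0 + b * (\<Sum>j<Suc i. lam ^ j)"
    by (simp add: algebra_simps sum_distrib_left lessThan_Suc_eq_insert_0 sum.reindex power_commutes)
  finally show ?case .
qed




lemma agent_final:
  assumes ag: "agent g Nk Bk c Dk a dl \<Gamma> wo" and Et: "real Ek * agent.t Nk c a dl \<le> 1"
  shows "measure_pmf.expectation (local_run (agent.upd g c a) Dk Ek w) (\<lambda>v. (norm (v - wo))\<^sup>2)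
    \<le> (norm (w - wo))\<^sup>2 - 2 * real Ek * (a * Bk) * inner (w - wo) (agent.gbar g Nk w)
       + real Ek * (4 * a\<^sup>2 * (agent.H Nk c)\<^sup>2 * dl\<^sup>2 + 6 * (a * Bk) * (real Ek * agent.t Nk c a dl) * dl) * (norm (w - wo) + \<Gamma>)\<^sup>2"
  using agent.moment[OF ag Et, of Ek] by simp

lemma geom_le:
  fixes q :: real
  assumes "0 \<le> q" "q < 1"
  shows "(\<Sum>j<i. q ^ j) \<le> 1 / (1 - q)"
proof -
  have "(\<Sum>j<i. q ^ j) = (1 - q ^ i) / (1 - q)" using assms by (simp add: sum_gp_strict)
  also have "\<dots> \<le> 1 / (1 - q)" using assms by (intro divide_right_mono) auto
  finally show ?thesis .
qed

theorem theorem1: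
  fixes K L :: nat and N E B :: "nat \<Rightarrow> nat"
    and x :: "nat \<Rightarrow> nat \<Rightarrow> 'd"
    and Q :: "nat \<Rightarrow> 'a::euclidean_space \<Rightarrow> 'd \<Rightarrow> real"
    and gQ :: "nat \<Rightarrow> 'a \<Rightarrow> 'd \<Rightarrow> 'a"
    and P :: "nat \<Rightarrow> 'a \<Rightarrow> real"
    and \<nu> \<delta> \<xi> :: real
    and wo w0 :: 'a and wko :: "nat \<Rightarrow> 'a"
    and p :: "nat \<Rightarrow> real" and pn :: "nat \<Rightarrow> nat \<Rightarrow> real"
    and S :: "nat set pmf" and D :: "nat \<Rightarrow> nat set pmf"
  assumes K_pos: "K \<ge> 1"
    and L_range: "1 \<le> L" "L \<le> K"
    and N_pos: "\<And>k. k < K \<Longrightarrow> N k \<ge> 1"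
    and E_pos: "\<And>k. k < K \<Longrightarrow> E k \<ge> 1"
    and B_range: "\<And>k. k < K \<Longrightarrow> 1 \<le> B k \<and> B k \<le> N k"
    and grad: "\<And>k w z. GDERIV (\<lambda>v. Q k v z) w :> gQ k w z"
    and P_def: "\<And>k w. P k w = (1 / real (N k)) * (\<Sum>n<N k. Q k w (x k n))"
    (* Assumption A *)
    and nu_pos: "\<nu> > 0"
    and P_strong: "\<And>k. k < K \<Longrightarrow> strongly_convex \<nu> (P k)"
    and Q_convex: "\<And>k n. k < K \<Longrightarrow> n < N k \<Longrightarrow> convex_on UNIV (\<lambda>w. Q k w (x k n))"
    and Q_lip: "\<And>k n w v. k < K \<Longrightarrow> n < N k \<Longrightarrow>
                   norm (gQ k w (x k n) - gQ k v (x k n)) \<le> \<delta> * norm (w - v)"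
    (* minimizers *)
    and wo_min: "\<And>w. (1 / real K) * (\<Sum>k<K. P k wo) \<le> (1 / real K) * (\<Sum>k<K. P k w)"
    and wko_min: "\<And>k w. k < K \<Longrightarrow> P k (wko k) \<le> P k w"
    (* Assumption B *)
    and model_drift: "\<And>k. k < K \<Longrightarrow> norm (wko k - wo) \<le> \<xi>"
    (* agent sampling: L distinct agents, inclusion probabilities L p_k *)
    and p_pos: "\<And>k. k < K \<Longrightarrow> p k > 0"
    and p_sum: "(\<Sum>k<K. p k) = 1"
    and S_support: "\<And>A. A \<in> set_pmf S \<Longrightarrow> A \<subseteq> {..<K} \<and> card A = L"
    and S_incl: "\<And>k. k < K \<Longrightarrow> measure_pmf.prob S {A. k \<in> A} = real L * p k"
    (* data sampling: B_k distinct points, inclusion probabilities B_k p_n^(k) *)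
    and pn_pos: "\<And>k n. k < K \<Longrightarrow> n < N k \<Longrightarrow> pn k n > 0"
    and pn_sum: "\<And>k. k < K \<Longrightarrow> (\<Sum>n<N k. pn k n) = 1"
    and D_support: "\<And>k Bs. k < K \<Longrightarrow> Bs \<in> set_pmf (D k) \<Longrightarrow> Bs \<subseteq> {..<N k} \<and> card Bs = B k"
    and D_incl: "\<And>k n. k < K \<Longrightarrow> n < N k \<Longrightarrow>
                   measure_pmf.prob (D k) {Bs. n \<in> Bs} = real (B k) * pn k n"
  shows "\<exists>\<mu>0 > 0. \<exists>c > 0. \<exists>d \<ge> 0. \<exists>C0 C1 C2.
           \<forall>\<mu>. 0 < \<mu> \<and> \<mu> < \<mu>0 \<longrightarrow>
             (let lam' = 1 - c * \<mu> + d * \<mu>\<^sup>2;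
                  gP = (\<lambda>k w. (1 / real (N k)) *\<^sub>R (\<Sum>n<N k. gQ k w (x k n)));
                  \<sigma>sk = (\<lambda>k. 6 / (real (E k) * real (B k) * (real (N k))\<^sup>2) *
                          (\<Sum>n<N k. (1 / pn k n) * (norm (gQ k wo (x k n)))\<^sup>2));
                  \<sigma>s = 1 / (real K)\<^sup>2 * (\<Sum>k<K. (1 / p k) *
                          (\<sigma>sk k + (3 + 6 / (real (E k) * real (B k))) * (norm (gP k wo))\<^sup>2));
                  \<sigma>qk = (\<lambda>k. 3 / (real (B k) * (real (N k))\<^sup>2) *
                          (\<Sum>n<N k. (1 / pn k n) * (norm (gQ k (wko k) (x k n)))\<^sup>2))
              in 0 \<le> lam' \<and> lam' < 1 \<and>
                 (\<forall>i. measure_pmf.expectation (isfedavg K L p S E B N pn D gQ x \<mu> w0 i)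
                          (\<lambda>w. (norm (wo - w))\<^sup>2)
                       \<le> C0 * lam' ^ i + C1 * \<mu> * (\<sigma>s + \<xi>\<^sup>2)
                          + C2 * \<mu>\<^sup>2 * ((1 / real K) * (\<Sum>k<K. \<sigma>qk k))))"
proof -
  define dl where "dl = max \<delta> 1"
  define \<Gamma> where "\<Gamma> = (\<Sum>k<K. \<Sum>n<N k. norm (gQ k wo (x k n)))"
  define cc where "cc k n = 1 / (real (N k) * pn k n)" for k n
  define a1 where "a1 k = 1 / (real K * p k * real (E k) * real (B k))" for k
  define Hk where "Hk k = (\<Sum>n<N k. cc k n)" for k
  define Ak where "Ak k = 2 * real (E k) * a1 k * Hk k * dl" for k
  define Zk where "Zk k = real (E k) * (4 * (a1 k)\<^sup>2 * (Hk k)\<^sup>2 * dl\<^sup>2 + 6 * (a1 k * real (B k)) * Ak k * dl)" for k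
  define Y where "Y = (\<Sum>k<K. p k * Zk k) + 1"
  define gP where "gP k w = (1 / real (N k)) *\<^sub>R (\<Sum>n<N k. gQ k w (x k n))" for k w
  define gg where "gg k n v = gQ k v (x k n)" for k n v
  define Asum where "Asum = (\<Sum>k<K. Ak k)"
  define V where "V w = (norm (wo - w))\<^sup>2" for w
  define R where "R \<mu> = isfedavg_local K p E B N pn gQ x \<mu> D" for \<mu>
  define phi where "phi \<mu> k w = measure_pmf.expectation (R \<mu> k w) (\<lambda>v. (norm (v - wo))\<^sup>2)" for \<mu> k w
  define sig where "sig = 1 / (real K)\<^sup>2 * (\<Sum>k<K. (1 / p k) *
                          (6 / (real (E k) * real (B k) * (real (N k))\<^sup>2) *
                          (\<Sum>n<N k. (1 / pn k n) * (norm (gQ k wo (x k n)))\<^sup>2)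
                           + (3 + 6 / (real (E k) * real (B k))) * (norm ((1 / real (N k)) *\<^sub>R (\<Sum>n<N k. gQ k wo (x k n))))\<^sup>2))"

  have K0: "real K > 0" using K_pos by simp
  have L0: "real L > 0" using L_range by simp
  have dl1: "dl \<ge> 1" by (simp add: dl_def)
  have G0: "\<Gamma> \<ge> 0" unfolding \<Gamma>_def by (intro sum_nonneg) auto
  have Npos: "\<And>k. k < K \<Longrightarrow> real (N k) > 0" using N_pos by (metis of_nat_0_less_iff less_le_trans zero_less_one)
  have Epos: "\<And>k. k < K \<Longrightarrow> real (E k) > 0" using E_pos by (metis of_nat_0_less_iff less_le_trans zero_less_one)
  have Bpos: "\<And>k. k < K \<Longrightarrow> real (B k) > 0" using B_range by (metis of_nat_0_less_iff less_le_trans zero_less_one)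
  have cc_pos: "\<And>k n. k < K \<Longrightarrow> n < N k \<Longrightarrow> cc k n > 0"
    using Npos pn_pos by (simp add: cc_def)
  have a1_pos: "\<And>k. k < K \<Longrightarrow> a1 k > 0"
    using K0 p_pos Epos Bpos by (simp add: a1_def)
  have Hk_nn: "\<And>k. k < K \<Longrightarrow> Hk k \<ge> 0"
    unfolding Hk_def using cc_pos by (intro sum_nonneg) (simp add: less_imp_le)
  have Ak_nn: "\<And>k. k < K \<Longrightarrow> Ak k \<ge> 0" using a1_pos Hk_nn dl1 by (simp add: Ak_def less_imp_le)
  have Zk_nn: "\<And>k. k < K \<Longrightarrow> Zk k \<ge> 0" using a1_pos Hk_nn dl1 Ak_nn by (simp add: Zk_def less_imp_le)
  have "(\<Sum>k<K. p k * Zk k) \<ge> 0"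
    by (rule sum_nonneg) (use Zk_nn p_pos in \<open>auto intro!: mult_nonneg_nonneg simp: less_imp_le\<close>)
  then have Y1: "Y \<ge> 1" unfolding Y_def by simp
  have Asum_nn: "Asum \<ge> 0" unfolding Asum_def by (rule sum_nonneg) (use Ak_nn in auto)
  have Ak_le: "\<And>k. k < K \<Longrightarrow> Ak k \<le> Asum" unfolding Asum_def using Ak_nn by (intro member_le_sum) auto

  have ag: "agent (gg k) (N k) (real (B k)) (cc k) (D k) (\<mu> * a1 k) dl \<Gamma> wo" if k: "k < K" and mu: "\<mu> \<ge> 0" for k \<mu>
  proof (unfold_locales)
    fix n assume "n < N k" then show "cc k n > 0" using cc_pos k by simp
  next
    fix n v u assume n: "n < N k"
    have "norm (gg k n v - gg k n u) \<le> \<delta> * norm (v - u)" using Q_lip[OF k n] by (simp add: gg_def)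
    also have "\<dots> \<le> dl * norm (v - u)" by (intro mult_right_mono) (auto simp: dl_def)
    finally show "norm (gg k n v - gg k n u) \<le> dl * norm (v - u)" .
  next
    fix n assume n: "n < N k"
    have "norm (gg k n wo) \<le> (\<Sum>n<N k. norm (gQ k wo (x k n)))" unfolding gg_def using n by (intro member_le_sum) auto
    also have "\<dots> \<le> \<Gamma>" unfolding \<Gamma>_def using k
      by (intro member_le_sum[where f="\<lambda>k. \<Sum>n<N k. norm (gQ k wo (x k n))"]) (auto intro: sum_nonneg)
    finally show "norm (gg k n wo) \<le> \<Gamma>" .
  next
    show "dl \<ge> 1" by (rule dl1)
    show "\<mu> * a1 k \<ge> 0" using mu a1_pos[OF k] by simp
    show "real (B k) \<ge> 0" by simp
    show "N k \<ge> 1" using N_pos[OF k] .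
    have "set_pmf (D k) \<subseteq> Pow {..<N k}" using D_support[OF k] by auto
    then show "finite (set_pmf (D k))" by (rule finite_subset) simp
  next
    fix Bs assume "Bs \<in> set_pmf (D k)" then show "Bs \<subseteq> {..<N k}" using D_support[OF k] by auto
  next
    fix n assume n: "n < N k"
    show "measure_pmf.prob (D k) {Bs. n \<in> Bs} * cc k n = real (B k) / real (N k)"
      using D_incl[OF k n] pn_pos[OF k n] by (simp add: cc_def)
  qed

  have Req: "R \<mu> k w = local_run (agent.upd (gg k) (cc k) (\<mu> * a1 k)) (D k) (E k) w" if k: "k < K" and mu: "\<mu> \<ge> 0" for \<mu> k w
  proof -
    have u: "agent.upd (gg k) (cc k) (\<mu> * a1 k) = (\<lambda>v Bs. v - (\<mu> * a1 k) *\<^sub>R (\<Sum>b\<in>Bs. cc k b *\<^sub>R gg k b v))"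
      by (simp add: fun_eq_iff agent.upd_def[OF ag[OF k mu]])
    show ?thesis unfolding R_def isfedavg_local_def u
      by (rule arg_cong[where f="\<lambda>u. local_run u (D k) (E k) w"]) (simp add: fun_eq_iff gg_def cc_def a1_def)
  qed

  have phi_bound: "phi \<mu> k w \<le> (norm (w - wo))\<^sup>2 - 2 * (\<mu> / (real K * p k)) * inner (w - wo) (gP k w)
      + \<mu>\<^sup>2 * Zk k * (norm (w - wo) + \<Gamma>)\<^sup>2"
    if k: "k < K" and mu: "\<mu> \<ge> 0" and muA: "\<mu> * Ak k \<le> 1" for \<mu> k w
  proof -
    have tt: "agent.t (N k) (cc k) (\<mu> * a1 k) dl = 2 * (\<mu> * a1 k) * Hk k * dl" by (simp add: agent.t_def[OF ag[OF k mu]] agent.H_def[OF ag[OF k mu]] Hk_def)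
    have HH: "agent.H (N k) (cc k) = Hk k" by (simp add: agent.H_def[OF ag[OF k mu]] Hk_def)
    have gb: "agent.gbar (gg k) (N k) w = gP k w" by (simp add: agent.gbar_def[OF ag[OF k mu]] gP_def gg_def)
    have Et: "real (E k) * agent.t (N k) (cc k) (\<mu> * a1 k) dl \<le> 1"
      using muA by (simp add: tt Ak_def mult_ac)
    have main: "phi \<mu> k w \<le> (norm (w - wo))\<^sup>2 - 2 * real (E k) * (\<mu> * a1 k * real (B k)) * inner (w - wo) (gP k w)
       + real (E k) * (4 * (\<mu> * a1 k)\<^sup>2 * (Hk k)\<^sup>2 * dl\<^sup>2 + 6 * (\<mu> * a1 k * real (B k)) * (real (E k) * (2 * (\<mu> * a1 k) * Hk k * dl)) * dl) * (norm (w - wo) + \<Gamma>)\<^sup>2"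
      using agent_final[OF ag[OF k mu] Et, of w] unfolding phi_def Req[OF k mu] HH gb tt .
    have e1: "2 * real (E k) * (\<mu> * a1 k * real (B k)) = 2 * (\<mu> / (real K * p k))"
      using Epos[OF k] Bpos[OF k] p_pos[OF k] K0 by (simp add: a1_def field_simps)
    have e2: "real (E k) * (4 * (\<mu> * a1 k)\<^sup>2 * (Hk k)\<^sup>2 * dl\<^sup>2 + 6 * (\<mu> * a1 k * real (B k)) * (real (E k) * (2 * (\<mu> * a1 k) * Hk k * dl)) * dl) = \<mu>\<^sup>2 * Zk k"
      by (simp add: Zk_def Ak_def power2_eq_square algebra_simps)
    show ?thesis using main unfolding e1 e2 .
  qed

  have Pgrad: "GDERIV (P k) w :> gP k w" for k w
  proof -
    have "P k = (\<lambda>w. (1 / real (N k)) * (\<Sum>n<N k. Q k w (x k n)))" using P_def by (simp add: fun_eq_iff)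
    moreover have "GDERIV (\<lambda>w. (1 / real (N k)) * (\<Sum>n<N k. Q k w (x k n))) w :> gP k w"
      unfolding gP_def by (rule grad_avg) (rule grad)
    ultimately show ?thesis by simp
  qed

  have sumzero: "(\<Sum>k<K. gP k wo) = 0"
  proof (rule fermat_grad)
    have "((\<lambda>w. \<Sum>k<K. P k w) has_derivative (\<lambda>h. \<Sum>k<K. inner h (gP k wo))) (at wo)"
      by (rule has_derivative_sum) (use Pgrad in \<open>simp add: gderiv_def\<close>)
    then show "GDERIV (\<lambda>w. \<Sum>k<K. P k w) wo :> (\<Sum>k<K. gP k wo)"
      unfolding gderiv_def by (rule has_derivative_eq_rhs) (simp add: fun_eq_iff inner_sum_right)
    fix v show "(\<Sum>k<K. P k wo) \<le> (\<Sum>k<K. P k v)"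
      using wo_min[of v] K0 by (simp add: divide_le_cancel)
  qed

  have cross: "(\<Sum>k<K. inner (w - wo) (gP k w)) \<ge> real K * \<nu> * (norm (w - wo))\<^sup>2" for w
  proof -
    have z: "(\<Sum>k<K. inner (w - wo) (gP k wo)) = 0" using sumzero by (simp add: inner_sum_right[symmetric])
    have "(\<Sum>k<K. inner (w - wo) (gP k w)) = (\<Sum>k<K. inner (w - wo) (gP k w - gP k wo))"
      using z by (simp add: inner_diff_right sum_subtractf)
    also have "\<dots> \<ge> (\<Sum>k<K. \<nu> * (norm (w - wo))\<^sup>2)"
      by (rule sum_mono) (use sc_mono[OF P_strong Pgrad Pgrad] in auto)
    finally show ?thesis by simp
  qed

  have S_fin: "finite (set_pmf S)"
  proof -
    have "set_pmf S \<subseteq> Pow {..<K}" using S_support by auto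
    then show ?thesis by (rule finite_subset) simp
  qed

  have finR: "finite (set_pmf (R \<mu> k w))" if "k < K" "\<mu> \<ge> 0" for \<mu> k w
    unfolding Req[OF that] by (rule agent.run_fin[OF ag[OF that]])

  have ks_facts: "finite A \<and> set (sorted_list_of_set A) = A \<and> distinct (sorted_list_of_set A)
      \<and> length (sorted_list_of_set A) = L \<and> A \<subseteq> {..<K}" if "A \<in> set_pmf S" for A
  proof -
    have A: "A \<subseteq> {..<K}" "card A = L" using S_support[OF that] by auto
    then have "finite A" using finite_subset by blast
    then show ?thesis using A by simp
  qed

  have step_fin: "finite (set_pmf (isfedavg_step (R \<mu>) S L w))" if "\<mu> \<ge> 0" for \<mu> w
    unfolding isfedavg_step_def
  proof (rule fin_bind_pmf[OF S_fin])
    fix A assume A: "A \<in> set_pmf S"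
    show "finite (set_pmf (map_pmf (\<lambda>s. (1 / real L) *\<^sub>R s) (sum_runs (R \<mu>) (sorted_list_of_set A) w)))"
      using ks_facts[OF A] by (auto intro!: sum_runs_fin finR that)
  qed

  have stepb: "measure_pmf.expectation (isfedavg_step (R \<mu>) S L w) V \<le> (1 - 2 * \<nu> * \<mu> + 2 * Y * \<mu>\<^sup>2) * V w + 2 * Y * \<mu>\<^sup>2 * \<Gamma>\<^sup>2"
    if mu: "\<mu> > 0" and muA: "\<And>k. k < K \<Longrightarrow> \<mu> * Ak k \<le> 1" for \<mu> w
  proof -
    have mu0: "\<mu> \<ge> 0" using mu by simp
    have inner_b: "measure_pmf.expectation (map_pmf (\<lambda>s. (1 / real L) *\<^sub>R s) (sum_runs (R \<mu>) (sorted_list_of_set A) w)) V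
        \<le> (1 / real L) * (\<Sum>k\<in>A. phi \<mu> k w)" if A: "A \<in> set_pmf S" for A
    proof -
      define ks where "ks = sorted_list_of_set A"
      have kf: "finite A" "set ks = A" "distinct ks" "length ks = L" "A \<subseteq> {..<K}"
        using ks_facts[OF A] unfolding ks_def by auto
      have finS: "finite (set_pmf (sum_runs (R \<mu>) ks w))"
        using kf by (auto intro!: sum_runs_fin finR mu0)
      have Vs: "V ((1 / real L) *\<^sub>R s) = (1 / real L)\<^sup>2 * (norm (s - real (length ks) *\<^sub>R wo))\<^sup>2" for s
      proof -
        have "wo - (1 / real L) *\<^sub>R s = - ((1 / real L) *\<^sub>R (s - real L *\<^sub>R wo))"
          using L0 by (simp add: algebra_simps)
        then have "norm (wo - (1 / real L) *\<^sub>R s) = (1 / real L) * norm (s - real L *\<^sub>R wo)"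
          using L0 by simp
        then show ?thesis unfolding V_def kf(4) by (simp add: power_divide)
      qed
      have "measure_pmf.expectation (map_pmf (\<lambda>s. (1 / real L) *\<^sub>R s) (sum_runs (R \<mu>) ks w)) V
          = (1 / real L)\<^sup>2 * measure_pmf.expectation (sum_runs (R \<mu>) ks w) (\<lambda>s. (norm (s - real (length ks) *\<^sub>R wo))\<^sup>2)"
        by (simp add: Vs)
      also have "\<dots> \<le> (1 / real L)\<^sup>2 * (real (length ks) * (\<Sum>k\<leftarrow>ks. phi \<mu> k w))"
        unfolding phi_def
        by (intro mult_left_mono sum_runs_bound) (use kf in \<open>auto intro!: finR mu0\<close>)
      also have "\<dots> = (1 / real L) * (\<Sum>k\<in>A. phi \<mu> k w)"
        using kf L0 by (simp add: sum_list_distinct_conv_sum_set power2_eq_square)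
      finally show ?thesis unfolding ks_def .
    qed
    have "measure_pmf.expectation (isfedavg_step (R \<mu>) S L w) V
        = measure_pmf.expectation S (\<lambda>A. measure_pmf.expectation (map_pmf (\<lambda>s. (1 / real L) *\<^sub>R s) (sum_runs (R \<mu>) (sorted_list_of_set A) w)) V)"
      unfolding isfedavg_step_def
    proof (rule int_bind_pmf[OF S_fin])
      fix A assume A: "A \<in> set_pmf S"
      show "finite (set_pmf (map_pmf (\<lambda>s. (1 / real L) *\<^sub>R s) (sum_runs (R \<mu>) (sorted_list_of_set A) w)))"
        using ks_facts[OF A] by (auto intro!: sum_runs_fin finR mu0)
    qed
    also have "\<dots> \<le> measure_pmf.expectation S (\<lambda>A. (1 / real L) * (\<Sum>k\<in>A. phi \<mu> k w))"
      by (rule exp_mono_fin[OF S_fin inner_b])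
    also have "\<dots> = (1 / real L) * measure_pmf.expectation S (\<lambda>A. \<Sum>k\<in>A. phi \<mu> k w)"
      by simp
    also have "\<dots> = (1 / real L) * (\<Sum>k<K. measure_pmf.prob S {A. k \<in> A} * phi \<mu> k w)"
      using exp_sum_incl[OF S_fin, of K "\<lambda>k. phi \<mu> k w"] S_support by auto
    also have "\<dots> = (\<Sum>k<K. p k * phi \<mu> k w)"
      using L0 by (simp add: S_incl sum_distrib_left)
    also have "\<dots> \<le> (\<Sum>k<K. p k * ((norm (w - wo))\<^sup>2 - 2 * (\<mu> / (real K * p k)) * inner (w - wo) (gP k w)
      + \<mu>\<^sup>2 * Zk k * (norm (w - wo) + \<Gamma>)\<^sup>2))"
      by (rule sum_mono, rule mult_left_mono) (use phi_bound muA mu0 p_pos in \<open>auto intro: less_imp_le\<close>)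
    also have "\<dots> = (norm (w - wo))\<^sup>2 - 2 * (\<mu> / real K) * (\<Sum>k<K. inner (w - wo) (gP k w))
      + \<mu>\<^sup>2 * (\<Sum>k<K. p k * Zk k) * (norm (w - wo) + \<Gamma>)\<^sup>2"
    proof -
      have "(\<Sum>k<K. p k * ((norm (w - wo))\<^sup>2 - 2 * (\<mu> / (real K * p k)) * inner (w - wo) (gP k w)
          + \<mu>\<^sup>2 * Zk k * (norm (w - wo) + \<Gamma>)\<^sup>2))
        = (\<Sum>k<K. p k * (norm (w - wo))\<^sup>2 - 2 * (\<mu> / real K) * inner (w - wo) (gP k w)
          + \<mu>\<^sup>2 * (p k * Zk k) * (norm (w - wo) + \<Gamma>)\<^sup>2)"
      proof (rule sum.cong[OF refl])
        fix k assume "k \<in> {..<K}"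
        then have pk: "p k \<noteq> 0" using p_pos[of k] by simp
        show "p k * ((norm (w - wo))\<^sup>2 - 2 * (\<mu> / (real K * p k)) * inner (w - wo) (gP k w)
          + \<mu>\<^sup>2 * Zk k * (norm (w - wo) + \<Gamma>)\<^sup>2)
          = p k * (norm (w - wo))\<^sup>2 - 2 * (\<mu> / real K) * inner (w - wo) (gP k w)
          + \<mu>\<^sup>2 * (p k * Zk k) * (norm (w - wo) + \<Gamma>)\<^sup>2"
          using pk by (simp add: field_simps)
      qed
      also have "\<dots> = (\<Sum>k<K. p k) * (norm (w - wo))\<^sup>2 - 2 * (\<mu> / real K) * (\<Sum>k<K. inner (w - wo) (gP k w))
          + \<mu>\<^sup>2 * (\<Sum>k<K. p k * Zk k) * (norm (w - wo) + \<Gamma>)\<^sup>2"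
        by (simp add: sum.distrib sum_subtractf sum_distrib_left sum_distrib_right)
      finally show ?thesis using p_sum by simp
    qed
    also have "\<dots> \<le> (norm (w - wo))\<^sup>2 - 2 * (\<mu> / real K) * (real K * \<nu> * (norm (w - wo))\<^sup>2)
      + \<mu>\<^sup>2 * Y * (norm (w - wo) + \<Gamma>)\<^sup>2"
    proof -
      have "2 * (\<mu> / real K) * (real K * \<nu> * (norm (w - wo))\<^sup>2) \<le> 2 * (\<mu> / real K) * (\<Sum>k<K. inner (w - wo) (gP k w))"
        using cross[of w] mu K0 by (intro mult_left_mono) auto
      moreover have "\<mu>\<^sup>2 * (\<Sum>k<K. p k * Zk k) * (norm (w - wo) + \<Gamma>)\<^sup>2 \<le> \<mu>\<^sup>2 * Y * (norm (w - wo) + \<Gamma>)\<^sup>2"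
        unfolding Y_def by (intro mult_right_mono mult_left_mono) auto
      ultimately show ?thesis by linarith
    qed
    also have "\<dots> \<le> (1 - 2 * \<nu> * \<mu> + 2 * Y * \<mu>\<^sup>2) * V w + 2 * Y * \<mu>\<^sup>2 * \<Gamma>\<^sup>2"
    proof -
      have Vw: "V w = (norm (w - wo))\<^sup>2" unfolding V_def by (simp add: norm_minus_commute)
      have sq: "(norm (w - wo) + \<Gamma>)\<^sup>2 \<le> 2 * (norm (w - wo))\<^sup>2 + 2 * \<Gamma>\<^sup>2"
        using zero_le_power2[of "norm (w - wo) - \<Gamma>"] by (simp add: power2_eq_square algebra_simps)
      have "\<mu>\<^sup>2 * Y * (norm (w - wo) + \<Gamma>)\<^sup>2 \<le> \<mu>\<^sup>2 * Y * (2 * (norm (w - wo))\<^sup>2 + 2 * \<Gamma>\<^sup>2)"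
        using Y1 sq by (intro mult_left_mono) auto
      moreover have "(norm (w - wo))\<^sup>2 - 2 * (\<mu> / real K) * (real K * \<nu> * (norm (w - wo))\<^sup>2) = (1 - 2 * \<nu> * \<mu>) * (norm (w - wo))\<^sup>2"
        using K0 by (simp add: field_simps)
      moreover have "\<mu>\<^sup>2 * Y * (2 * (norm (w - wo))\<^sup>2 + 2 * \<Gamma>\<^sup>2) = 2 * Y * \<mu>\<^sup>2 * (norm (w - wo))\<^sup>2 + 2 * Y * \<mu>\<^sup>2 * \<Gamma>\<^sup>2"
        by (simp add: algebra_simps)
      moreover have "(1 - 2 * \<nu> * \<mu> + 2 * Y * \<mu>\<^sup>2) * (norm (w - wo))\<^sup>2 = (1 - 2 * \<nu> * \<mu>) * (norm (w - wo))\<^sup>2 + 2 * Y * \<mu>\<^sup>2 * (norm (w - wo))\<^sup>2"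
        by (simp add: algebra_simps)
      ultimately show ?thesis unfolding Vw by linarith
    qed
    finally show ?thesis .
  qed

  have sigG: "\<Gamma> = 0" if z: "sig + \<xi>\<^sup>2 = 0"
  proof -
    define tm where "tm k = (1 / p k) *
                          (6 / (real (E k) * real (B k) * (real (N k))\<^sup>2) *
                          (\<Sum>n<N k. (1 / pn k n) * (norm (gQ k wo (x k n)))\<^sup>2)
                           + (3 + 6 / (real (E k) * real (B k))) * (norm ((1 / real (N k)) *\<^sub>R (\<Sum>n<N k. gQ k wo (x k n))))\<^sup>2)" for k
    have inner_nn: "\<And>k. k < K \<Longrightarrow> (\<Sum>n<N k. (1 / pn k n) * (norm (gQ k wo (x k n)))\<^sup>2) \<ge> 0"
      using pn_pos by (intro sum_nonneg) (simp add: less_imp_le)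
    have tm_nn: "\<And>k. k \<in> {..<K} \<Longrightarrow> tm k \<ge> 0"
      unfolding tm_def using p_pos inner_nn by (auto intro!: mult_nonneg_nonneg add_nonneg_nonneg simp: less_imp_le)
    have "(\<Sum>k<K. tm k) \<ge> 0" by (rule sum_nonneg) (use tm_nn in auto)
    then have sig_nn: "sig \<ge> 0" unfolding sig_def tm_def[symmetric] by simp
    have "sig = 0" using z sig_nn by (smt (verit) zero_le_power2)
    then have "(\<Sum>k<K. tm k) = 0" unfolding sig_def tm_def[symmetric] using K0 by simp
    then have tm0: "\<And>k. k < K \<Longrightarrow> tm k = 0" using sum_nonneg_eq_0_iff[of "{..<K}" tm] tm_nn by auto
    have "\<And>k n. k < K \<Longrightarrow> n < N k \<Longrightarrow> norm (gQ k wo (x k n)) = 0"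
    proof -
      fix k n assume k: "k < K" and n: "n < N k"
      define X where "X = (\<Sum>n<N k. (1 / pn k n) * (norm (gQ k wo (x k n)))\<^sup>2)"
      define c6 where "c6 = 6 / (real (E k) * real (B k) * (real (N k))\<^sup>2)"
      define Y2 where "Y2 = (3 + 6 / (real (E k) * real (B k))) * (norm ((1 / real (N k)) *\<^sub>R (\<Sum>n<N k. gQ k wo (x k n))))\<^sup>2"
      have c6p: "c6 > 0" unfolding c6_def using Epos[OF k] Bpos[OF k] Npos[OF k] by simp
      have Xn: "X \<ge> 0" unfolding X_def using inner_nn[OF k] .
      have Y2n: "Y2 \<ge> 0" unfolding Y2_def using Epos[OF k] Bpos[OF k] by (intro mult_nonneg_nonneg add_nonneg_nonneg) auto
      have "(1 / p k) * (c6 * X + Y2) = 0" using tm0[OF k] unfolding tm_def X_def c6_def Y2_def .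
      then have "c6 * X + Y2 = 0" using p_pos[OF k] by simp
      then have "c6 * X = 0" using Xn Y2n c6p by (smt (verit) mult_nonneg_nonneg)
      then have "X = 0" using c6p by simp
      then have "(1 / pn k n) * (norm (gQ k wo (x k n)))\<^sup>2 = 0"
        unfolding X_def using sum_nonneg_eq_0_iff[of "{..<N k}" "\<lambda>n. (1 / pn k n) * (norm (gQ k wo (x k n)))\<^sup>2"]
          pn_pos[OF k] n by (auto simp: less_imp_le)
      then show "norm (gQ k wo (x k n)) = 0" using pn_pos[OF k n] by simp
    qed
    then show ?thesis unfolding \<Gamma>_def by simp
  qed

  define \<mu>0 where "\<mu>0 = min (1 / (1 + Asum)) (min (1 / (2 * \<nu>)) (\<nu> / (2 * Y)))"
  define C1 where "C1 = (if sig + \<xi>\<^sup>2 = 0 then 0 else (2 * Y * \<Gamma>\<^sup>2 / \<nu>) / (sig + \<xi>\<^sup>2))"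
  have Y0: "Y > 0" using Y1 by simp
  have mu0pos: "\<mu>0 > 0" unfolding \<mu>0_def using Asum_nn nu_pos Y0 by simp

  have main: "0 \<le> 1 - (2 * \<nu>) * \<mu> + (2 * Y) * \<mu>\<^sup>2 \<and> 1 - (2 * \<nu>) * \<mu> + (2 * Y) * \<mu>\<^sup>2 < 1 \<and>
      (\<forall>i. measure_pmf.expectation (isfedavg K L p S E B N pn D gQ x \<mu> w0 i) V
          \<le> V w0 * (1 - (2 * \<nu>) * \<mu> + (2 * Y) * \<mu>\<^sup>2) ^ i + C1 * \<mu> * (sig + \<xi>\<^sup>2))"
    if mu: "0 < \<mu>" "\<mu> < \<mu>0" for \<mu>
  proof -
    define lam where "lam = 1 - (2 * \<nu>) * \<mu> + (2 * Y) * \<mu>\<^sup>2"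
    have m1: "\<mu> * (1 + Asum) < 1" using mu Asum_nn unfolding \<mu>0_def by (simp add: field_simps)
    have muA: "\<And>k. k < K \<Longrightarrow> \<mu> * Ak k \<le> 1"
    proof -
      fix k assume "k < K"
      then have "Ak k \<le> 1 + Asum" using Ak_le[of k] by simp
      then have "\<mu> * Ak k \<le> \<mu> * (1 + Asum)" using mu by (intro mult_left_mono) auto
      then show "\<mu> * Ak k \<le> 1" using m1 by simp
    qed
    have m2: "2 * \<nu> * \<mu> < 1" using mu nu_pos unfolding \<mu>0_def by (simp add: field_simps)
    have m3: "2 * Y * \<mu> < \<nu>" using mu Y0 unfolding \<mu>0_def by (simp add: field_simps)
    have lam0: "lam \<ge> 0" unfolding lam_def using m2 Y0 by (smt (verit) mult_nonneg_nonneg zero_le_power2)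
    have gap: "1 - lam \<ge> \<nu> * \<mu>"
    proof -
      have "2 * Y * \<mu>\<^sup>2 = (2 * Y * \<mu>) * \<mu>" by (simp add: power2_eq_square)
      also have "\<dots> \<le> \<nu> * \<mu>" using m3 mu by (intro mult_right_mono) auto
      finally show ?thesis unfolding lam_def by (simp add: mult.commute)
    qed
    have numu: "\<nu> * \<mu> > 0" using nu_pos mu by simp
    have lam1: "lam < 1" using gap numu by simp
    define b where "b = 2 * Y * \<mu>\<^sup>2 * \<Gamma>\<^sup>2"
    have b0: "b \<ge> 0" unfolding b_def using Y0 by simp
    have it: "measure_pmf.expectation (iterate_pmf (isfedavg_step (R \<mu>) S L) w0 i) V \<le> lam ^ i * V w0 + b * (\<Sum>j<i. lam ^ j)" for i
      by (rule iter_bound[OF step_fin]) (use mu stepb muA lam0 in \<open>auto simp: lam_def b_def\<close>)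
    have bb: "b * (\<Sum>j<i. lam ^ j) \<le> C1 * \<mu> * (sig + \<xi>\<^sup>2)" for i
    proof -
      have "b * (\<Sum>j<i. lam ^ j) \<le> b * (1 / (1 - lam))" using geom_le[OF lam0 lam1] b0 by (intro mult_left_mono)
      also have "\<dots> \<le> b * (1 / (\<nu> * \<mu>))" using gap numu b0 by (intro mult_left_mono divide_left_mono) auto
      also have "\<dots> = 2 * Y * \<Gamma>\<^sup>2 / \<nu> * \<mu>" unfolding b_def using mu nu_pos by (simp add: field_simps power2_eq_square)
      also have "\<dots> = C1 * \<mu> * (sig + \<xi>\<^sup>2)"
      proof (cases "sig + \<xi>\<^sup>2 = 0")
        case True then show ?thesis using sigG by (simp add: C1_def)
      next
        case False then show ?thesis by (simp add: C1_def)
      qed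
      finally show ?thesis .
    qed
    show ?thesis
    proof (intro conjI allI)
      show "0 \<le> 1 - (2 * \<nu>) * \<mu> + (2 * Y) * \<mu>\<^sup>2" using lam0 unfolding lam_def .
      show "1 - (2 * \<nu>) * \<mu> + (2 * Y) * \<mu>\<^sup>2 < 1" using lam1 unfolding lam_def .
      fix i
      have "isfedavg K L p S E B N pn D gQ x \<mu> w0 i = iterate_pmf (isfedavg_step (R \<mu>) S L) w0 i"
        by (simp add: isfedavg_def R_def)
      then show "measure_pmf.expectation (isfedavg K L p S E B N pn D gQ x \<mu> w0 i) V
          \<le> V w0 * (1 - (2 * \<nu>) * \<mu> + (2 * Y) * \<mu>\<^sup>2) ^ i + C1 * \<mu> * (sig + \<xi>\<^sup>2)"
        using it[of i] bb[of i] unfolding lam_def by (simp add: mult.commute)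
    qed
  qed
  show ?thesis
  proof (rule exI[of _ \<mu>0], rule conjI[OF mu0pos], rule exI[of _ "2 * \<nu>"], rule conjI, use nu_pos in simp,
      rule exI[of _ "2 * Y"], rule conjI, use Y0 in simp,
      rule exI[of _ "V w0"], rule exI[of _ C1], rule exI[of _ 0], intro allI impI)
    fix \<mu> assume "0 < \<mu> \<and> \<mu> < \<mu>0"
    then have M: "0 \<le> 1 - (2 * \<nu>) * \<mu> + (2 * Y) * \<mu>\<^sup>2 \<and> 1 - (2 * \<nu>) * \<mu> + (2 * Y) * \<mu>\<^sup>2 < 1 \<and>
      (\<forall>i. measure_pmf.expectation (isfedavg K L p S E B N pn D gQ x \<mu> w0 i) V
          \<le> V w0 * (1 - (2 * \<nu>) * \<mu> + (2 * Y) * \<mu>\<^sup>2) ^ i + C1 * \<mu> * (sig + \<xi>\<^sup>2))" using main by blast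
    show "let lam' = 1 - 2 * \<nu> * \<mu> + 2 * Y * \<mu>\<^sup>2;
                  gP = (\<lambda>k w. (1 / real (N k)) *\<^sub>R (\<Sum>n<N k. gQ k w (x k n)));
                  \<sigma>sk = (\<lambda>k. 6 / (real (E k) * real (B k) * (real (N k))\<^sup>2) *
                          (\<Sum>n<N k. (1 / pn k n) * (norm (gQ k wo (x k n)))\<^sup>2));
                  \<sigma>s = 1 / (real K)\<^sup>2 * (\<Sum>k<K. (1 / p k) *
                          (\<sigma>sk k + (3 + 6 / (real (E k) * real (B k))) * (norm (gP k wo))\<^sup>2));
                  \<sigma>qk = (\<lambda>k. 3 / (real (B k) * (real (N k))\<^sup>2) *
                          (\<Sum>n<N k. (1 / pn k n) * (norm (gQ k (wko k) (x k n)))\<^sup>2))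
              in 0 \<le> lam' \<and> lam' < 1 \<and>
                 (\<forall>i. measure_pmf.expectation (isfedavg K L p S E B N pn D gQ x \<mu> w0 i)
                          (\<lambda>w. (norm (wo - w))\<^sup>2)
                       \<le> V w0 * lam' ^ i + C1 * \<mu> * (\<sigma>s + \<xi>\<^sup>2)
                          + 0 * \<mu>\<^sup>2 * ((1 / real K) * (\<Sum>k<K. \<sigma>qk k)))"
      unfolding Let_def using M unfolding V_def[abs_def] sig_def by simp
  qed
qed


end
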